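(* Let $f$ be a homeomorphism of a compact metric space $(X,d)$ and let $\mu$ be a Borel measure on $X$ with $\mu(X)>0$. Then: (i) $\mu$ is expansive with respect to $f$ if and only if $UE^\mu_f(X)=X$; (ii) $f$ is measure-expansive if and only if $UE^M_f(X)=X$; (iii) $\mu$ has shadowing with respect to $f$ if and only if $Sh^\mu_f(X)=X$.
   Context: $B(x,\epsilon)=\{y:d(x,y)<\epsilon\}$. For $\mathfrak{c}>0$ and $x\in X$, $\Phi^{\mathfrak{c}}_f(x)=\{y\in X: d(f^n(x),f^n(y))\le\mathfrak{c}\ \forall n\in\mathbb{Z}\}$. $\mu$ is expansive (w.r.t. $f$) if there is $\mathfrak{c}>0$ with $\mu(\Phi^{\mathfrak{c}}_f(x))=0$ for every $x\in X$. $f$ is measure-expansive if there is $\mathfrak{c}>0$ such that for every non-atomic Borel measure $\nu$ on $X$ and every $x\in X$, $\nu(\Phi^{\mathfrak{c}}_f(x))=0$. For a point $x$ and $\mathfrak{c}>0$, and $z\in B(x,\mathfrak{c})$, let $\Gamma^{\mathfrak{c}}_f(z)=\{y\in B(x,\mathfrak{c}): d(f^n(y),f^n(z))\le\mathfrak{c}\ \forall n\in\mathbb{Z}\}$. $x$ is a $\mu$-uniformly expansive point of $f$ if there is $\mathfrak{c}>0$ with $\mu(\Gamma^{\mathfrak{c}}_f(z))=0$ for every $z\in B(x,\mathfrak{c})$; $UE^\mu_f(X)$ is the set of such points. $x$ is a uniformly measure expansive point of $f$ if there is $\mathfrak{c}>0$ such that for every non-atomic Borel measure $\nu$ on $X$,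 $\nu(\Gamma^{\mathfrak{c}}_f(z))=0$ for every $z\in B(x,\mathfrak{c})$; $UE^M_f(X)$ is the set of such points. A $\delta$-pseudo orbit for $f$ is $\{x_n\}_{n\in\mathbb{Z}}$ with $d(f(x_n),x_{n+1})<\delta$ for all $n$; it is through a set $B$ if $x_0\in B$; it is $\epsilon$-traced if there is $y\in X$ with $d(f^n(y),x_n)<\epsilon$ for all $n$. $\mu$ has shadowing (w.r.t. $f$) if for every $\epsilon>0$ there are $\delta>0$ and a Borel set $B$ with $\mu(X\setminus B)=0$ such that every $\delta$-pseudo orbit through $B$ is $\epsilon$-traced. $x$ is a $\mu$-shadowable point of $f$ if for every $\epsilon>0$ there are $\delta>0$ and a Borel set $B$ with $\mu(X\setminus B)=0$ such that every $\delta$-pseudo orbit through $B\cap B(x,\delta)$ is $\epsilon$-traced; $Sh^\mu_f(X)$ is the set of such points. *)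

theory Defs
  imports "HOL-Analysis.Analysis" "HOL-Probability.Probability"
begin

text \<open>The compact metric space X is the (compact) universe of a metric-space type 'a.
  Integer iterates of a homeomorphism f.\<close>

definition iter_int :: "('a \<Rightarrow> 'a) \<Rightarrow> int \<Rightarrow> 'a \<Rightarrow> 'a" where
  "iter_int f n = (if 0 \<le> n then f ^^ nat n else inv f ^^ nat (- n))"

definition is_homeomorphism :: "('a::topological_space \<Rightarrow> 'a) \<Rightarrow> bool" where
  "is_homeomorphism f \<longleftrightarrow> bij f \<and> continuous_on UNIV f \<and> continuous_on UNIV (inv f)"

definition borel_measure :: "'a::topological_space measure \<Rightarrow> bool" where
  "borel_measure M \<longleftrightarrow> sets M = sets borel"

definition non_atomic :: "'a measure \<Rightarrow> bool" where
  "non_atomic M \<longleftrightarrow> (\<forall>x. emeasure M {x} = 0)"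

definition Phi :: "('a::metric_space \<Rightarrow> 'a) \<Rightarrow> real \<Rightarrow> 'a \<Rightarrow> 'a set" where
  "Phi f c x = {y. \<forall>n::int. dist (iter_int f n x) (iter_int f n y) \<le> c}"

definition expansive_measure :: "('a::metric_space \<Rightarrow> 'a) \<Rightarrow> 'a measure \<Rightarrow> bool" where
  "expansive_measure f M \<longleftrightarrow> (\<exists>c>0. \<forall>x. emeasure M (Phi f c x) = 0)"

definition measure_expansive :: "('a::metric_space \<Rightarrow> 'a) \<Rightarrow> bool" where
  "measure_expansive f \<longleftrightarrow> (\<exists>c>0. \<forall>\<nu>::'a measure. borel_measure \<nu> \<and> non_atomic \<nu> \<longrightarrow>
      (\<forall>x. emeasure \<nu> (Phi f c x) = 0))"

definition Gamma :: "('a::metric_space \<Rightarrow> 'a) \<Rightarrow> real \<Rightarrow> 'a \<Rightarrow> 'a \<Rightarrow> 'a set" where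
  "Gamma f c x z = {y \<in> ball x c. \<forall>n::int. dist (iter_int f n y) (iter_int f n z) \<le> c}"

definition UE_mu :: "('a::metric_space \<Rightarrow> 'a) \<Rightarrow> 'a measure \<Rightarrow> 'a set" where
  "UE_mu f M = {x. \<exists>c>0. \<forall>z\<in>ball x c. emeasure M (Gamma f c x z) = 0}"

definition UE_M :: "('a::metric_space \<Rightarrow> 'a) \<Rightarrow> 'a set" where
  "UE_M f = {x. \<exists>c>0. \<forall>\<nu>::'a measure. borel_measure \<nu> \<and> non_atomic \<nu> \<longrightarrow>
      (\<forall>z\<in>ball x c. emeasure \<nu> (Gamma f c x z) = 0)}"

definition pseudo_orbit :: "('a::metric_space \<Rightarrow> 'a) \<Rightarrow> real \<Rightarrow> (int \<Rightarrow> 'a) \<Rightarrow> bool" where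
  "pseudo_orbit f \<delta> xs \<longleftrightarrow> (\<forall>n. dist (f (xs n)) (xs (n + 1)) < \<delta>)"

definition traced :: "('a::metric_space \<Rightarrow> 'a) \<Rightarrow> real \<Rightarrow> (int \<Rightarrow> 'a) \<Rightarrow> bool" where
  "traced f \<epsilon> xs \<longleftrightarrow> (\<exists>y. \<forall>n. dist (iter_int f n y) (xs n) < \<epsilon>)"

definition measure_shadowing :: "('a::metric_space \<Rightarrow> 'a) \<Rightarrow> 'a measure \<Rightarrow> bool" where
  "measure_shadowing f M \<longleftrightarrow> (\<forall>\<epsilon>>0. \<exists>\<delta>>0. \<exists>B\<in>sets M. emeasure M (UNIV - B) = 0 \<and>
      (\<forall>xs. pseudo_orbit f \<delta> xs \<and> xs 0 \<in> B \<longrightarrow> traced f \<epsilon> xs))"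

definition Sh_mu :: "('a::metric_space \<Rightarrow> 'a) \<Rightarrow> 'a measure \<Rightarrow> 'a set" where
  "Sh_mu f M = {x. \<forall>\<epsilon>>0. \<exists>\<delta>>0. \<exists>B\<in>sets M. emeasure M (UNIV - B) = 0 \<and>
      (\<forall>xs. pseudo_orbit f \<delta> xs \<and> xs 0 \<in> B \<inter> ball x \<delta> \<longrightarrow> traced f \<epsilon> xs)}"

end

theory Submission
  imports Defs
begin

lemma iter_int_0[simp]: "iter_int f 0 y = y"
  by (simp add: iter_int_def)

lemma cont_funpow: "continuous_on UNIV (g::'a::topological_space \<Rightarrow> 'a) \<Longrightarrow> continuous_on UNIV (g ^^ n)"
proof (induction n)
  case 0 have "g ^^ 0 = (\<lambda>x. x)" by (simp add: id_def)
  then show ?case by (simp add: continuous_on_id)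
next
  case (Suc n)
  then have "continuous_on UNIV (g \<circ> (g ^^ n))"
    by (intro continuous_on_compose) (auto intro: continuous_on_subset)
  then show ?case by simp
qed
lemma cont_iter_int:
  assumes "is_homeomorphism f"
  shows "continuous_on UNIV (iter_int f n)"
proof -
  have "continuous_on UNIV f" "continuous_on UNIV (inv f)" using assms unfolding is_homeomorphism_def by auto
  then show ?thesis unfolding iter_int_def by (simp add: cont_funpow)
qed

lemma closed_follow:
  assumes "is_homeomorphism (f::'a::metric_space \<Rightarrow> 'a)"
  shows "closed {y. \<forall>n::int. dist (iter_int f n y) (iter_int f n z) \<le> c}"
proof -
  have "{y. \<forall>n::int. dist (iter_int f n y) (iter_int f n z) \<le> c}
        = (\<Inter>n. {y. dist (iter_int f n y) (iter_int f n z) \<le> c})" (is "_ = ?R") by blast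
  moreover have cl: "closed {y. dist (iter_int f n y) (iter_int f n z) \<le> c}" for n
  proof (rule closed_Collect_le)
    show "continuous_on UNIV (\<lambda>y. dist (iter_int f n y) (iter_int f n z))"
      by (rule continuous_on_dist[OF cont_iter_int[OF assms] continuous_on_const])
  qed (rule continuous_on_const)
  moreover have "closed ?R" by (rule closed_INT) (use cl in blast)
  ultimately show ?thesis by simp
qed

lemma Phi_eq: "Phi f c z = {y. \<forall>n::int. dist (iter_int f n y) (iter_int f n z) \<le> c}"
  unfolding Phi_def by (simp add: dist_commute)

lemma Gamma_eq: "Gamma f c x z = ball x c \<inter> {y. \<forall>n::int. dist (iter_int f n y) (iter_int f n z) \<le> c}"
  unfolding Gamma_def by auto

lemma Phi_sets:
  assumes "is_homeomorphism f" "sets N = sets borel"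
  shows "Phi f c z \<in> sets N"
  unfolding Phi_eq assms(2) by (rule borel_closed[OF closed_follow[OF assms(1)]])

lemma Gamma_sets:
  assumes "is_homeomorphism f" "sets N = sets borel"
  shows "Gamma f c x z \<in> sets N"
  unfolding Gamma_eq assms(2)
  by (rule sets.Int[OF borel_open[OF open_ball] borel_closed[OF closed_follow[OF assms(1)]]])

lemma L1:
  assumes "is_homeomorphism f" "sets N = sets borel" "emeasure N (Phi f c z) = 0"
  shows "emeasure N (Gamma f c x z) = 0"
proof -
  have "Gamma f c x z \<subseteq> Phi f c z" unfolding Gamma_eq Phi_eq by auto
  then have "emeasure N (Gamma f c x z) \<le> emeasure N (Phi f c z)"
    by (intro emeasure_mono Phi_sets assms)
  then show ?thesis using assms(3) by simp
qed

lemma L2: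
  assumes "is_homeomorphism f" "sets N = sets borel" "finite F"
    and cov: "\<forall>y. \<exists>x\<in>F. dist x y < r x / 2 \<and> c \<le> r x / 2"
    and G: "\<forall>x\<in>F. \<forall>z\<in>ball x (r x). emeasure N (Gamma f (r x) x z) = 0"
  shows "emeasure N (Phi f c z) = 0"
proof -
  let ?I = "{x\<in>F. z \<in> ball x (r x)}"
  have sub: "Phi f c z \<subseteq> (\<Union>x\<in>?I. Gamma f (r x) x z)"
  proof
    fix y assume y: "y \<in> Phi f c z"
    obtain x where x: "x \<in> F" "dist x y < r x / 2" "c \<le> r x / 2" using cov by blast
    have yz: "\<forall>n::int. dist (iter_int f n y) (iter_int f n z) \<le> c" using y unfolding Phi_eq by auto
    then have "dist y z \<le> c" by (metis iter_int_0)
    then have "dist x z < r x" using x dist_triangle[of x z y] by linarith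
    moreover have "y \<in> Gamma f (r x) x z"
    proof -
      have rx: "r x > 0" using x(2) zero_le_dist[of x y] by linarith
      have "dist x y < r x" using x(2) rx by linarith
      moreover have "\<forall>n::int. dist (iter_int f n y) (iter_int f n z) \<le> r x"
      proof
        fix n :: int
        have "c \<le> r x" using x(3) rx by linarith
        then show "dist (iter_int f n y) (iter_int f n z) \<le> r x" using yz[rule_format, of n] by linarith
      qed
      ultimately show ?thesis unfolding Gamma_def by auto
    qed
    ultimately show "y \<in> (\<Union>x\<in>?I. Gamma f (r x) x z)" using x by auto
  qed
  have "(\<Union>x\<in>?I. Gamma f (r x) x z) \<in> null_sets N"
    using G assms(3) Gamma_sets[OF assms(1,2)]
    by (intro null_sets_UN') (auto intro: countable_finite)
  then have "Phi f c z \<in> null_sets N"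
    by (rule null_sets_subset[OF _ Phi_sets[OF assms(1,2)] sub])
  then show ?thesis by (rule null_setsD1)
qed

lemma cover:
  fixes r :: "'a::metric_space \<Rightarrow> real"
  assumes "compact (UNIV :: 'a set)" "\<forall>x. r x > 0"
  shows "\<exists>F c. finite F \<and> c > 0 \<and> (\<forall>y. \<exists>x\<in>F. dist x y < r x / 2 \<and> c \<le> r x / 2)"
proof -
  have U: "UNIV \<subseteq> (\<Union>x. ball x (r x / 2))" using assms(2) by auto
  obtain F where F: "finite F" "UNIV \<subseteq> (\<Union>x\<in>F. ball x (r x / 2))"
  proof (rule compactE_image[OF assms(1) _ U])
    show "open (ball T (r T / 2))" for T by simp
  qed blast
  have ne: "F \<noteq> {}" using F(2) by auto
  define c where "c = Min ((\<lambda>x. r x / 2) ` F)"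
  have "c > 0" unfolding c_def using F(1) ne assms(2) by (subst Min_gr_iff) auto
  moreover have "\<forall>y. \<exists>x\<in>F. dist x y < r x / 2 \<and> c \<le> r x / 2"
  proof
    fix y obtain x where x: "x \<in> F" "y \<in> ball x (r x / 2)" using F(2) by blast
    have "c \<le> r x / 2" unfolding c_def using F(1) x(1) by (intro Min_le) auto
    then show "\<exists>x\<in>F. dist x y < r x / 2 \<and> c \<le> r x / 2"
      using x by auto
  qed
  ultimately show ?thesis using F(1) by blast
qed

theorem proposition3p4:
  fixes f :: "'a::metric_space \<Rightarrow> 'a" and M :: "'a measure"
  assumes "compact (UNIV :: 'a set)"
    and "is_homeomorphism f"
    and "borel_measure M"
    and "emeasure M UNIV > 0"
  shows "(expansive_measure f M \<longleftrightarrow> UE_mu f M = UNIV)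
       \<and> (measure_expansive f \<longleftrightarrow> UE_M f = UNIV)
       \<and> (measure_shadowing f M \<longleftrightarrow> Sh_mu f M = UNIV)"
proof (intro conjI)
  have sM: "sets M = sets borel" using assms(3) borel_measure_def by auto
  show "expansive_measure f M \<longleftrightarrow> UE_mu f M = UNIV"
  proof
    assume "expansive_measure f M"
    then obtain c where c: "c > 0" "\<forall>x. emeasure M (Phi f c x) = 0"
      unfolding expansive_measure_def by auto
    have "x \<in> UE_mu f M" for x
    proof -
      have "\<forall>z\<in>ball x c. emeasure M (Gamma f c x z) = 0"
        using L1[OF assms(2) sM] c(2) by blast
      then show ?thesis unfolding UE_mu_def using c(1) by blast
    qed
    then show "UE_mu f M = UNIV" by blast
  next
    assume "UE_mu f M = UNIV"
    then have h: "\<forall>x. \<exists>c. c > 0 \<and> (\<forall>z\<in>ball x c. emeasure M (Gamma f c x z) = 0)"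
      unfolding UE_mu_def by auto
    have "\<exists>r. \<forall>x. r x > 0 \<and> (\<forall>z\<in>ball x (r x). emeasure M (Gamma f (r x) x z) = 0)"
      using h by (rule choice)
    then obtain r where r: "\<forall>x. r x > 0 \<and> (\<forall>z\<in>ball x (r x). emeasure M (Gamma f (r x) x z) = 0)"
      by blast
    have rpos: "\<forall>x. r x > 0" using r by blast
    obtain F c where Fc: "finite F" "c > 0" "\<forall>y. \<exists>x\<in>F. dist x y < r x / 2 \<and> c \<le> r x / 2"
      using cover[OF assms(1) rpos] by blast
    have G: "\<forall>x\<in>F. \<forall>z\<in>ball x (r x). emeasure M (Gamma f (r x) x z) = 0" using r by blast
    show "expansive_measure f M" unfolding expansive_measure_def
    proof (intro exI[of _ c] conjI allI)
      show "c > 0" by fact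
      fix x show "emeasure M (Phi f c x) = 0"
        by (rule L2[OF assms(2) sM Fc(1) Fc(3) G])
    qed
  qed
  show "measure_expansive f \<longleftrightarrow> UE_M f = UNIV"
  proof
    assume "measure_expansive f"
    then obtain c where c: "c > 0" "\<forall>\<nu>::'a measure. borel_measure \<nu> \<and> non_atomic \<nu> \<longrightarrow>
      (\<forall>x. emeasure \<nu> (Phi f c x) = 0)"
      unfolding measure_expansive_def by auto
    have "x \<in> UE_M f" for x
    proof -
      have "\<forall>\<nu>::'a measure. borel_measure \<nu> \<and> non_atomic \<nu> \<longrightarrow>
        (\<forall>z\<in>ball x c. emeasure \<nu> (Gamma f c x z) = 0)"
      proof (intro allI impI ballI)
        fix \<nu> :: "'a measure" and z assume h: "borel_measure \<nu> \<and> non_atomic \<nu>"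
        then have s: "sets \<nu> = sets borel" by (simp add: borel_measure_def)
        have "emeasure \<nu> (Phi f c z) = 0" using c(2) h by blast
        then show "emeasure \<nu> (Gamma f c x z) = 0" by (rule L1[OF assms(2) s])
      qed
      then show ?thesis unfolding UE_M_def using c(1) by blast
    qed
    then show "UE_M f = UNIV" by blast
  next
    assume "UE_M f = UNIV"
    then have h: "\<forall>x. \<exists>c. c > 0 \<and> (\<forall>\<nu>::'a measure. borel_measure \<nu> \<and> non_atomic \<nu> \<longrightarrow>
      (\<forall>z\<in>ball x c. emeasure \<nu> (Gamma f c x z) = 0))"
      unfolding UE_M_def by auto
    have "\<exists>r. \<forall>x. r x > 0 \<and> (\<forall>\<nu>::'a measure. borel_measure \<nu> \<and> non_atomic \<nu> \<longrightarrow>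
      (\<forall>z\<in>ball x (r x). emeasure \<nu> (Gamma f (r x) x z) = 0))"
      using h by (rule choice)
    then obtain r where r: "\<forall>x. r x > 0 \<and> (\<forall>\<nu>::'a measure. borel_measure \<nu> \<and> non_atomic \<nu> \<longrightarrow>
      (\<forall>z\<in>ball x (r x). emeasure \<nu> (Gamma f (r x) x z) = 0))"
      by blast
    have rpos: "\<forall>x. r x > 0" using r by blast
    obtain F c where Fc: "finite F" "c > 0" "\<forall>y. \<exists>x\<in>F. dist x y < r x / 2 \<and> c \<le> r x / 2"
      using cover[OF assms(1) rpos] by blast
    show "measure_expansive f" unfolding measure_expansive_def
    proof (intro exI[of _ c] conjI allI impI)
      show "c > 0" by fact
      fix \<nu> :: "'a measure" and x assume h: "borel_measure \<nu> \<and> non_atomic \<nu>"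
      then have s: "sets \<nu> = sets borel" by (simp add: borel_measure_def)
      have G: "\<forall>x\<in>F. \<forall>z\<in>ball x (r x). emeasure \<nu> (Gamma f (r x) x z) = 0"
        using r h by blast
      show "emeasure \<nu> (Phi f c x) = 0"
        by (rule L2[OF assms(2) s Fc(1) Fc(3) G])
    qed
  qed
  show "measure_shadowing f M \<longleftrightarrow> Sh_mu f M = UNIV"
  proof
    assume "measure_shadowing f M"
    then show "Sh_mu f M = UNIV" unfolding measure_shadowing_def Sh_mu_def by blast
  next
    assume A: "Sh_mu f M = UNIV"
    show "measure_shadowing f M" unfolding measure_shadowing_def
    proof (intro allI impI)
      fix \<epsilon> :: real assume "\<epsilon> > 0"
      then have h: "\<forall>x. \<exists>\<delta>. \<delta> > 0 \<and> (\<exists>B. B \<in> sets M \<and> emeasure M (UNIV - B) = 0 \<and>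
        (\<forall>xs. pseudo_orbit f \<delta> xs \<and> xs 0 \<in> B \<inter> ball x \<delta> \<longrightarrow> traced f \<epsilon> xs))"
        using A unfolding Sh_mu_def by blast
      have "\<exists>r. \<forall>x. r x > 0 \<and> (\<exists>B. B \<in> sets M \<and> emeasure M (UNIV - B) = 0 \<and>
        (\<forall>xs. pseudo_orbit f (r x) xs \<and> xs 0 \<in> B \<inter> ball x (r x) \<longrightarrow> traced f \<epsilon> xs))"
        using h by (rule choice)
      then obtain r where r: "\<forall>x. r x > 0 \<and> (\<exists>B. B \<in> sets M \<and> emeasure M (UNIV - B) = 0 \<and>
        (\<forall>xs. pseudo_orbit f (r x) xs \<and> xs 0 \<in> B \<inter> ball x (r x) \<longrightarrow> traced f \<epsilon> xs))"
        by blast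
      then have "\<forall>x. \<exists>B. B \<in> sets M \<and> emeasure M (UNIV - B) = 0 \<and>
        (\<forall>xs. pseudo_orbit f (r x) xs \<and> xs 0 \<in> B \<inter> ball x (r x) \<longrightarrow> traced f \<epsilon> xs)"
        by blast
      then have "\<exists>B. \<forall>x. B x \<in> sets M \<and> emeasure M (UNIV - B x) = 0 \<and>
        (\<forall>xs. pseudo_orbit f (r x) xs \<and> xs 0 \<in> B x \<inter> ball x (r x) \<longrightarrow> traced f \<epsilon> xs)"
        by (rule choice)
      then obtain B where B: "\<forall>x. B x \<in> sets M \<and> emeasure M (UNIV - B x) = 0 \<and>
        (\<forall>xs. pseudo_orbit f (r x) xs \<and> xs 0 \<in> B x \<inter> ball x (r x) \<longrightarrow> traced f \<epsilon> xs)"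
        by blast
      have rpos: "\<forall>x. r x > 0" using r by blast
      obtain F c where Fc: "finite F" "c > 0" "\<forall>y. \<exists>x\<in>F. dist x y < r x / 2 \<and> c \<le> r x / 2"
        using cover[OF assms(1) rpos] by blast
      have ne: "F \<noteq> {}" using Fc(3) by blast
      let ?B = "\<Inter>x\<in>F. B x"
      have Bs: "?B \<in> sets M"
        using B Fc(1) ne by (intro sets.finite_INT) auto
      have spM: "space M = UNIV" using sets_eq_imp_space_eq[OF sM] by simp
      have nul: "UNIV - B x \<in> null_sets M" for x
      proof -
        have "B x \<in> sets M" using B by blast
        then have "space M - B x \<in> sets M" by (rule sets.compl_sets)
        then have "UNIV - B x \<in> sets M" using spM by simp
        moreover have "emeasure M (UNIV - B x) = 0" using B by blast
        ultimately show ?thesis by (intro null_setsI)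
      qed
      have "(\<Union>x\<in>F. UNIV - B x) \<in> null_sets M"
        using nul Fc(1) by (intro null_sets_UN') (auto intro: countable_finite)
      moreover have "UNIV - ?B = (\<Union>x\<in>F. UNIV - B x)" by blast
      ultimately have mB: "emeasure M (UNIV - ?B) = 0" by (metis null_setsD1)
      have tr: "\<forall>xs. pseudo_orbit f c xs \<and> xs 0 \<in> ?B \<longrightarrow> traced f \<epsilon> xs"
      proof (intro allI impI)
        fix xs assume h: "pseudo_orbit f c xs \<and> xs 0 \<in> ?B"
        obtain x where x: "x \<in> F" "dist x (xs 0) < r x / 2" "c \<le> r x / 2" using Fc(3) by blast
        have rx: "r x > 0" using rpos by blast
        have "pseudo_orbit f (r x) xs" unfolding pseudo_orbit_def
        proof
          fix n have "dist (f (xs n)) (xs (n + 1)) < c" using h unfolding pseudo_orbit_def by blast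
          then show "dist (f (xs n)) (xs (n + 1)) < r x" using x(3) rx by linarith
        qed
        moreover have "xs 0 \<in> B x \<inter> ball x (r x)" using h x rx by auto
        ultimately show "traced f \<epsilon> xs" using B by blast
      qed
      show "\<exists>\<delta>>0. \<exists>B\<in>sets M. emeasure M (UNIV - B) = 0 \<and>
        (\<forall>xs. pseudo_orbit f \<delta> xs \<and> xs 0 \<in> B \<longrightarrow> traced f \<epsilon> xs)"
        using Fc(2) Bs mB tr by blast
    qed
  qed
qed

end
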